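(* Consider a sequence $(x^k,y^k)$ generated by Algorithm IP (described in the context). For every $k\geq0$: (1) $q(x^{k+1})\leq q_{\mu_k}(x^{k+1})\leq q_{\mu_k}(x^k)$, and, for $k\geq1$, $q_{\mu_k}(x^k)\leq q_{\mu_{k-1}}(x^k)$; (2) $x^{k+1}$ is $\varepsilon_k$-stationary for $q_{\mu_k}$, i.e. $\operatorname{dist}(0,\hat\partial q_{\mu_k}(x^{k+1}))\leq\varepsilon_k$, and in particular $x^{k+1}$ is strictly feasible: $x^{k+1}\in\operatorname{dom} q$ and $c(x^{k+1})<0$; (3) $y^{k+1}\geq0$; (4) $\operatorname{dist}\bigl(-\nabla c(x^{k+1})^\top y^{k+1},\,\partial q(x^{k+1})\bigr)\leq\varepsilon_k$.
   Context: Setting: $f:\mathbb{R}^n\to\mathbb{R}$ has locally Lipschitz continuous gradient; $g:\mathbb{R}^n\to\mathbb{R}\cup\{\infty\}$ is proper, lower semicontinuous, prox-bounded ($g+\frac{1}{2\gamma}\|\cdot\|^2$ bounded below for some $\gamma>0$; $\gamma_g\in(0,\infty]$ denotes the supremum of such $\gamma$), and continuous relative to $\operatorname{dom} g$ (whenever $\operatorname{dom} g\ni x^k\to x$, $g(x^k)\to g(x)$); $c:\mathbb{R}^n\to\mathbb{R}^m$ has locally Lipschitz continuous Jacobian $\nabla c$. $q=f+g$, $\inf\{q(x): c(x)\le0\}\in\mathbb{R}$, $D=\{x: c(x)<0\}$, $F=\operatorname{dom} q\cap D\neq\emptyset$. The barrier $b:\mathbb{R}\to[0,\infty]$ has $\operatorname{dom}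 b=(-\infty,0)$, is twice continuously differentiable with $b'>0$ there, and $b(t)\to\infty$ as $t\to0^-$. For $\mu>0$: $f_\mu(z)=f(z)+\mu\sum_{i=1}^m b(c_i(z))$ ($=\infty$ outside $D$), $q_\mu=f_\mu+g$. $\hat\partial$ is the regular and $\partial$ the limiting subdifferential. $T_{\mu,\gamma}(z)=\operatorname{prox}_{\gamma g}(z-\gamma\nabla f_\mu(z))$ with $\operatorname{prox}_{\gamma g}(x)=\operatorname{argmin}_w\{g(w)+\frac{1}{2\gamma}\|w-x\|^2\}$. Inner solver IP-FB$(z^0,\mu,\varepsilon)$ (inputs $z^0\in F$, $\mu,\varepsilon>0$; parameters $\gamma_0\in(0,\gamma_g)$, $\alpha,\beta\in(0,1)$): set $j=0$ and start at step 2. Step 1 ($j\geq1$): $\gamma_j\gets\gamma_{j-1}$, $z^j\gets\bar z^{j-1}$. Step 2: compute $\bar z^j\in T_{\mu,\gamma_j}(z^j)$. Step 3: unless (a) $c(\bar z^j)<0$, (b) $q_\mu(\bar z^j)\leq q_\mu(z^j)-\frac{1-\alpha}{2\gamma_j}\|\bar z^j-z^j\|^2$ and (c) $\|\nabla f_\mu(\bar z^j)-\nabla f_\mu(z^j)\|\leq\frac{\alpha}{\gamma_j}\|\bar z^j-z^j\|$ all hold, set $\gamma_j\gets\beta\gamma_j$ and go back to Step 2. Step 4: if $\|\frac{1}{\gamma_j}(z^j-\bar z^j)-\nabla f_\mu(z^j)+\nabla f_\mu(\bar z^j)\|\leq\varepsilon$, return $\bar z^j$. Step 5: $j\gets j+1$,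 go to Step 1. Algorithm IP: inputs $x^0\in F$, tolerances $\epsilon_{\rm p},\epsilon_{\rm d}>0$; parameters $\varepsilon_0,\mu_0>0$, $\theta_\varepsilon,\theta_\mu\in(0,1)$. For $k=0,1,2,\dots$: (i) $x^{k+1}=$ IP-FB$(x^k,\mu_k,\varepsilon_k)$; (ii) $y_i^{k+1}=\mu_k b'(c_i(x^{k+1}))$ for all $i$; (iii) if $\varepsilon_k\leq\epsilon_{\rm d}$ and $\max_i\min\{-c_i(x^{k+1}),y_i^{k+1}\}\leq\epsilon_{\rm p}$, return $(x^{k+1},y^{k+1})$; (iv) choose $0<\varepsilon_{k+1}\leq\max\{\epsilon_{\rm d},\theta_\varepsilon\varepsilon_k\}$ and $0<\mu_{k+1}\leq\theta_\mu\mu_k$. *)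

theory Defs
  imports "HOL-Analysis.Analysis"
begin

definition loc_lipschitz :: "('a::metric_space \<Rightarrow> 'b::metric_space) \<Rightarrow> bool" where
  "loc_lipschitz F \<longleftrightarrow>
     (\<forall>x. \<exists>r>0. \<exists>L. \<forall>u\<in>ball x r. \<forall>v\<in>ball x r. dist (F u) (F v) \<le> L * dist u v)"

definition lsc_fun :: "('a::metric_space \<Rightarrow> ereal) \<Rightarrow> bool" where
  "lsc_fun h \<longleftrightarrow> (\<forall>x X. X \<longlonglongrightarrow> x \<longrightarrow> h x \<le> liminf (\<lambda>k. h (X k)))"

definition proper_fun :: "('a \<Rightarrow> ereal) \<Rightarrow> bool" where
  "proper_fun h \<longleftrightarrow> (\<forall>x. h x \<noteq> -\<infinity>) \<and> (\<exists>x. h x \<noteq> \<infinity>)"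

definition prox_bdd :: "('a::real_normed_vector \<Rightarrow> ereal) \<Rightarrow> real \<Rightarrow> bool" where
  "prox_bdd h \<gamma> \<longleftrightarrow> (\<exists>B::real. \<forall>x. ereal B \<le> h x + ereal ((norm x)\<^sup>2 / (2 * \<gamma>)))"

definition prox_bounded :: "('a::real_normed_vector \<Rightarrow> ereal) \<Rightarrow> bool" where
  "prox_bounded h \<longleftrightarrow> (\<exists>\<gamma>>0. prox_bdd h \<gamma>)"

definition prox_threshold :: "('a::real_normed_vector \<Rightarrow> ereal) \<Rightarrow> ereal" where
  "prox_threshold h = Sup {ereal \<gamma> | \<gamma>. \<gamma> > 0 \<and> prox_bdd h \<gamma>}"

definition cont_rel_dom :: "('a::metric_space \<Rightarrow> ereal) \<Rightarrow> bool" where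
  "cont_rel_dom h \<longleftrightarrow>
     (\<forall>x X. (\<forall>k. h (X k) \<noteq> \<infinity>) \<longrightarrow> X \<longlonglongrightarrow> x \<longrightarrow> (\<lambda>k. h (X k)) \<longlonglongrightarrow> h x)"

text \<open>Regular (Frechet) subdifferential: v such that
  liminf_{z \<rightarrow> x, z \<noteq> x} (h z - h x - <v, z - x>) / norm (z - x) \<ge> 0, with h x finite.\<close>
definition regular_subdiff :: "('a::real_inner \<Rightarrow> ereal) \<Rightarrow> 'a \<Rightarrow> 'a set" where
  "regular_subdiff h x = {v. \<bar>h x\<bar> \<noteq> \<infinity> \<and>
     (\<forall>e>0. \<exists>d>0. \<forall>z. norm (z - x) < d \<longrightarrow>
        h x + ereal (inner v (z - x) - e * norm (z - x)) \<le> h z)}"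

definition limiting_subdiff :: "('a::real_inner \<Rightarrow> ereal) \<Rightarrow> 'a \<Rightarrow> 'a set" where
  "limiting_subdiff h x = {v. \<exists>X V. X \<longlonglongrightarrow> x \<and> (\<lambda>k. h (X k)) \<longlonglongrightarrow> h x \<and>
     (\<forall>k. V k \<in> regular_subdiff h (X k)) \<and> V \<longlonglongrightarrow> v}"

text \<open>dist(p, S) \<le> e with the convention dist(p, {}) = \<infinity>\<close>
definition dist_set_le :: "'a::metric_space \<Rightarrow> 'a set \<Rightarrow> real \<Rightarrow> bool" where
  "dist_set_le p S e \<longleftrightarrow> S \<noteq> {} \<and> infdist p S \<le> e"

definition prox_set :: "('a::real_normed_vector \<Rightarrow> ereal) \<Rightarrow> real \<Rightarrow> 'a \<Rightarrow> 'a set" where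
  "prox_set h \<gamma> x = {w. \<forall>v. h w + ereal ((norm (w - x))\<^sup>2 / (2 * \<gamma>))
                            \<le> h v + ereal ((norm (v - x))\<^sup>2 / (2 * \<gamma>))}"

definition strict_feas :: "nat \<Rightarrow> (nat \<Rightarrow> 'a \<Rightarrow> real) \<Rightarrow> 'a \<Rightarrow> bool" where
  "strict_feas m c x \<longleftrightarrow> (\<forall>i<m. c i x < 0)"

definition qfun :: "('a \<Rightarrow> real) \<Rightarrow> ('a \<Rightarrow> ereal) \<Rightarrow> 'a \<Rightarrow> ereal" where
  "qfun f g x = ereal (f x) + g x"

definition fmu :: "('a \<Rightarrow> real) \<Rightarrow> nat \<Rightarrow> (nat \<Rightarrow> 'a \<Rightarrow> real) \<Rightarrow> (real \<Rightarrow> real)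
                    \<Rightarrow> real \<Rightarrow> 'a \<Rightarrow> ereal" where
  "fmu f m c b \<mu> z = (if strict_feas m c z then ereal (f z + \<mu> * (\<Sum>i<m. b (c i z))) else \<infinity>)"

definition qmu :: "('a \<Rightarrow> real) \<Rightarrow> ('a \<Rightarrow> ereal) \<Rightarrow> nat \<Rightarrow> (nat \<Rightarrow> 'a \<Rightarrow> real) \<Rightarrow> (real \<Rightarrow> real)
                    \<Rightarrow> real \<Rightarrow> 'a \<Rightarrow> ereal" where
  "qmu f g m c b \<mu> z = fmu f m c b \<mu> z + g z"

definition grad_fmu :: "('a \<Rightarrow> 'a::real_vector) \<Rightarrow> nat \<Rightarrow> (nat \<Rightarrow> 'a \<Rightarrow> real) \<Rightarrow> (nat \<Rightarrow> 'a \<Rightarrow> 'a)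
                        \<Rightarrow> (real \<Rightarrow> real) \<Rightarrow> real \<Rightarrow> 'a \<Rightarrow> 'a" where
  "grad_fmu gf m c gc db \<mu> z = gf z + \<mu> *\<^sub>R (\<Sum>i<m. db (c i z) *\<^sub>R gc i z)"

section \<open>Inner solver IP-FB (for generic qm = q_mu, G = grad f_mu, feasibility test)\<close>

definition Tmap :: "('a::real_normed_vector \<Rightarrow> ereal) \<Rightarrow> ('a \<Rightarrow> 'a) \<Rightarrow> real \<Rightarrow> 'a \<Rightarrow> 'a set" where
  "Tmap g G \<gamma> z = prox_set g \<gamma> (z - \<gamma> *\<^sub>R G z)"

definition fb_accept :: "('a::real_normed_vector \<Rightarrow> bool) \<Rightarrow> ('a \<Rightarrow> ereal) \<Rightarrow> ('a \<Rightarrow> 'a)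
                         \<Rightarrow> real \<Rightarrow> real \<Rightarrow> 'a \<Rightarrow> 'a \<Rightarrow> bool" where
  "fb_accept feas qm G \<alpha> \<gamma> z w \<longleftrightarrow>
     feas w \<and>
     qm w \<le> qm z - ereal ((1 - \<alpha>) / (2 * \<gamma>) * (norm (w - z))\<^sup>2) \<and>
     norm (G w - G z) \<le> \<alpha> / \<gamma> * norm (w - z)"

definition fb_backtrack :: "('a::real_normed_vector \<Rightarrow> bool) \<Rightarrow> ('a \<Rightarrow> ereal) \<Rightarrow> ('a \<Rightarrow> ereal)
      \<Rightarrow> ('a \<Rightarrow> 'a) \<Rightarrow> real \<Rightarrow> real \<Rightarrow> real \<Rightarrow> 'a \<Rightarrow> real \<Rightarrow> 'a \<Rightarrow> bool" where
  "fb_backtrack feas qm g G \<alpha> \<beta> \<gamma>in z \<gamma>out w \<longleftrightarrow>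
     (\<exists>l::nat. \<gamma>out = \<beta> ^ l * \<gamma>in \<and> w \<in> Tmap g G \<gamma>out z \<and> fb_accept feas qm G \<alpha> \<gamma>out z w \<and>
        (\<forall>i<l. \<exists>w'. w' \<in> Tmap g G (\<beta> ^ i * \<gamma>in) z \<and> \<not> fb_accept feas qm G \<alpha> (\<beta> ^ i * \<gamma>in) z w'))"

definition fb_stop :: "('a::real_normed_vector \<Rightarrow> 'a) \<Rightarrow> real \<Rightarrow> 'a \<Rightarrow> 'a \<Rightarrow> real \<Rightarrow> bool" where
  "fb_stop G \<gamma> z w \<epsilon> \<longleftrightarrow> norm ((1 / \<gamma>) *\<^sub>R (z - w) - G z + G w) \<le> \<epsilon>"

text \<open>x is a possible return value of IP-FB(z0, mu, eps): a run with iterates z j, trial outputs zb j,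
  accepted stepsizes gam j, stopping at iteration J.\<close>
definition ipfb_returns :: "('a::real_normed_vector \<Rightarrow> bool) \<Rightarrow> ('a \<Rightarrow> ereal) \<Rightarrow> ('a \<Rightarrow> ereal)
      \<Rightarrow> ('a \<Rightarrow> 'a) \<Rightarrow> real \<Rightarrow> real \<Rightarrow> real \<Rightarrow> 'a \<Rightarrow> real \<Rightarrow> 'a \<Rightarrow> bool" where
  "ipfb_returns feas qm g G \<gamma>0 \<alpha> \<beta> z0 \<epsilon> x \<longleftrightarrow>
     (\<exists>J::nat. \<exists>z zb gam.
        z 0 = z0 \<and>
        (\<forall>j\<le>J. fb_backtrack feas qm g G \<alpha> \<beta> (if j = 0 then \<gamma>0 else gam (j - 1)) (z j) (gam j) (zb j)) \<and>
        (\<forall>j<J. \<not> fb_stop G (gam j) (z j) (zb j) \<epsilon> \<and> z (Suc j) = zb j) \<and>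
        fb_stop G (gam J) (z J) (zb J) \<epsilon> \<and>
        x = zb J)"

end

theory Submission
  imports Defs
begin

lemma ipfb_basic:
  assumes R: "ipfb_returns feas qm g G \<gamma>0 \<alpha> \<beta> z0 \<epsilon> x"
    and g0: "0 < \<gamma>0" and a1: "\<alpha> < 1" and b0: "0 < \<beta>"
  shows "\<exists>\<gamma> z. 0 < \<gamma> \<and> x \<in> Tmap g G \<gamma> z \<and> fb_accept feas qm G \<alpha> \<gamma> z x
           \<and> fb_stop G \<gamma> z x \<epsilon> \<and> qm z \<le> qm z0"
proof -
  from R obtain J z zb gam where
    z0: "z 0 = z0" and
    bt: "\<forall>j\<le>J. fb_backtrack feas qm g G \<alpha> \<beta> (if j = 0 then \<gamma>0 else gam (j - 1)) (z j) (gam j) (zb j)" and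
    st: "\<forall>j<J. \<not> fb_stop G (gam j) (z j) (zb j) \<epsilon> \<and> z (Suc j) = zb j" and
    fs: "fb_stop G (gam J) (z J) (zb J) \<epsilon>" and xe: "x = zb J"
    unfolding ipfb_returns_def by blast
  have dec: "qm w \<le> qm u" if "fb_accept feas qm G \<alpha> \<gamma> u w" "0 < \<gamma>" for w u \<gamma>
  proof -
    have nn: "0 \<le> (1 - \<alpha>) / (2 * \<gamma>) * (norm (w - u))\<^sup>2" using a1 that(2) by simp
    have "qm w \<le> qm u - ereal ((1 - \<alpha>) / (2 * \<gamma>) * (norm (w - u))\<^sup>2)"
      using that(1) unfolding fb_accept_def by blast
    also have "\<dots> \<le> qm u" using nn by (cases "qm u") auto
    finally show ?thesis .
  qed
  have P: "j \<le> J \<longrightarrow> 0 < gam j \<and> qm (z j) \<le> qm z0 \<and> fb_accept feas qm G \<alpha> (gam j) (z j) (zb j)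
              \<and> zb j \<in> Tmap g G (gam j) (z j)" for j
  proof (induction j)
    case 0
    show ?case
    proof
      assume "0 \<le> J"
      then obtain l where l: "gam 0 = \<beta> ^ l * \<gamma>0" "zb 0 \<in> Tmap g G (gam 0) (z 0)"
          "fb_accept feas qm G \<alpha> (gam 0) (z 0) (zb 0)"
        using bt unfolding fb_backtrack_def by force
      show "0 < gam 0 \<and> qm (z 0) \<le> qm z0 \<and> fb_accept feas qm G \<alpha> (gam 0) (z 0) (zb 0)
              \<and> zb 0 \<in> Tmap g G (gam 0) (z 0)"
        using l g0 b0 z0 by simp
    qed
  next
    case (Suc i)
    show ?case
    proof
      assume iJ: "Suc i \<le> J"
      then have IH: "0 < gam i \<and> qm (z i) \<le> qm z0 \<and> fb_accept feas qm G \<alpha> (gam i) (z i) (zb i)"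
        using Suc.IH by simp
      from iJ obtain l where l: "gam (Suc i) = \<beta> ^ l * gam i" "zb (Suc i) \<in> Tmap g G (gam (Suc i)) (z (Suc i))"
          "fb_accept feas qm G \<alpha> (gam (Suc i)) (z (Suc i)) (zb (Suc i))"
        using bt unfolding fb_backtrack_def by fastforce
      have zs: "z (Suc i) = zb i" using st iJ by simp
      have "qm (zb i) \<le> qm (z i)" using dec IH by blast
      then have "qm (z (Suc i)) \<le> qm z0" using zs IH by (metis order_trans)
      then show "0 < gam (Suc i) \<and> qm (z (Suc i)) \<le> qm z0
          \<and> fb_accept feas qm G \<alpha> (gam (Suc i)) (z (Suc i)) (zb (Suc i))
              \<and> zb (Suc i) \<in> Tmap g G (gam (Suc i)) (z (Suc i))"
        using l IH b0 by simp
    qed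
  qed
  show ?thesis using P[of J] fs xe by blast
qed


lemma prox_regular:
  fixes g :: "'a::real_inner \<Rightarrow> ereal"
  assumes w: "w \<in> prox_set g \<gamma> a" and gp: "0 < \<gamma>" and fin: "\<bar>g w\<bar> \<noteq> \<infinity>"
  shows "(1 / \<gamma>) *\<^sub>R (a - w) \<in> regular_subdiff g w"
proof -
  obtain gw where gw: "g w = ereal gw" using fin by (cases "g w") auto
  define p where "p = (1 / \<gamma>) *\<^sub>R (a - w)"
  have key: "g w + ereal (inner p (u - w) - (norm (u - w))\<^sup>2 / (2 * \<gamma>)) \<le> g u" for u
  proof -
    have A: "g w + ereal ((norm (w - a))\<^sup>2 / (2 * \<gamma>)) \<le> g u + ereal ((norm (u - a))\<^sup>2 / (2 * \<gamma>))"
      using w unfolding prox_set_def by blast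
    have id: "(norm (u - a))\<^sup>2 = (norm (w - a))\<^sup>2 + 2 * inner (w - a) (u - w) + (norm (u - w))\<^sup>2"
    proof -
      have gen: "(norm (x + y))\<^sup>2 = (norm x)\<^sup>2 + 2 * inner x y + (norm y)\<^sup>2" for x y :: 'a
        by (simp add: power2_norm_eq_inner inner_add_left inner_add_right inner_commute)
      have "u - a = (w - a) + (u - w)" by simp
      then show ?thesis using gen[of "w - a" "u - w"] by metis
    qed
    have ip: "inner p (u - w) = - inner (w - a) (u - w) / \<gamma>"
      unfolding p_def using gp by (simp add: inner_diff_left field_simps)
    have E: "(norm (w - a))\<^sup>2 / (2 * \<gamma>) - (norm (u - a))\<^sup>2 / (2 * \<gamma>)
           = inner p (u - w) - (norm (u - w))\<^sup>2 / (2 * \<gamma>)"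
      unfolding ip id using gp by (simp add: field_simps)
    show ?thesis
    proof (cases "g u")
      case (real r)
      with A gw have "gw + (norm (w - a))\<^sup>2 / (2 * \<gamma>) \<le> r + (norm (u - a))\<^sup>2 / (2 * \<gamma>)" by simp
      then have "gw + (inner p (u - w) - (norm (u - w))\<^sup>2 / (2 * \<gamma>)) \<le> r" using E by linarith
      then show ?thesis using real gw by simp
    next
      case PInf then show ?thesis by simp
    next
      case MInf with A gw show ?thesis by simp
    qed
  qed
  have "p \<in> regular_subdiff g w"
    unfolding regular_subdiff_def
  proof (intro CollectI conjI allI impI)
    show "\<bar>g w\<bar> \<noteq> \<infinity>" by fact
    fix e :: real assume e: "e > 0"
    show "\<exists>d>0. \<forall>z. norm (z - w) < d \<longrightarrow> g w + ereal (inner p (z - w) - e * norm (z - w)) \<le> g z"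
    proof (intro exI[of _ "2 * \<gamma> * e"] conjI allI impI)
      show "0 < 2 * \<gamma> * e" using gp e by simp
      fix z assume z: "norm (z - w) < 2 * \<gamma> * e"
      have "(norm (z - w))\<^sup>2 / (2 * \<gamma>) \<le> e * norm (z - w)"
      proof -
        have "(norm (z - w))\<^sup>2 = norm (z - w) * norm (z - w)" by (simp add: power2_eq_square)
        also have "\<dots> \<le> norm (z - w) * (2 * \<gamma> * e)" using z by (intro mult_left_mono) auto
        finally show ?thesis using gp by (simp add: field_simps)
      qed
      then have "g w + ereal (inner p (z - w) - e * norm (z - w))
          \<le> g w + ereal (inner p (z - w) - (norm (z - w))\<^sup>2 / (2 * \<gamma>))"
        using gw by simp
      also have "\<dots> \<le> g z" by (rule key)
      finally show "g w + ereal (inner p (z - w) - e * norm (z - w)) \<le> g z" .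
    qed
  qed
  then show ?thesis unfolding p_def .
qed

lemma regular_subdiff_add_smooth:
  fixes h H :: "'a::real_inner \<Rightarrow> ereal"
  assumes p: "p \<in> regular_subdiff h w"
    and F: "(F has_derivative (\<lambda>v. inner v D)) (at w)"
    and S: "open S" "w \<in> S" and H: "\<And>u. u \<in> S \<Longrightarrow> H u = ereal (F u) + h u"
  shows "p + D \<in> regular_subdiff H w"
proof -
  have fin: "\<bar>h w\<bar> \<noteq> \<infinity>" and pr: "\<And>e. e>0 \<Longrightarrow> \<exists>d>0. \<forall>z. norm (z - w) < d \<longrightarrow>
        h w + ereal (inner p (z - w) - e * norm (z - w)) \<le> h z"
    using p unfolding regular_subdiff_def by auto
  obtain hw where hw: "h w = ereal hw" using fin by (cases "h w") auto
  have Fd: "\<And>e. e>0 \<Longrightarrow> \<exists>d>0. \<forall>y. norm (y - w) < d \<longrightarrow> norm (F y - F w - inner (y - w) D) \<le> e * norm (y - w)"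
    using F unfolding has_derivative_at_alt by blast
  obtain r where r: "r > 0" "ball w r \<subseteq> S" using S openE by blast
  show ?thesis
    unfolding regular_subdiff_def
  proof (intro CollectI conjI allI impI)
    show "\<bar>H w\<bar> \<noteq> \<infinity>" using H[OF S(2)] hw by simp
    fix e :: real assume e: "e > 0"
    obtain d1 where d1: "d1 > 0" "\<forall>z. norm (z - w) < d1 \<longrightarrow> h w + ereal (inner p (z - w) - e/2 * norm (z - w)) \<le> h z"
      using pr[of "e/2"] e by auto
    obtain d2 where d2: "d2 > 0" "\<forall>y. norm (y - w) < d2 \<longrightarrow> norm (F y - F w - inner (y - w) D) \<le> e/2 * norm (y - w)"
      using Fd[of "e/2"] e by auto
    show "\<exists>d>0. \<forall>z. norm (z - w) < d \<longrightarrow> H w + ereal (inner (p + D) (z - w) - e * norm (z - w)) \<le> H z"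
    proof (intro exI[of _ "min r (min d1 d2)"] conjI allI impI)
      show "0 < min r (min d1 d2)" using r d1 d2 by simp
      fix z assume z: "norm (z - w) < min r (min d1 d2)"
      have zS: "z \<in> S" using z r by (auto simp: dist_norm norm_minus_commute)
      have A: "h w + ereal (inner p (z - w) - e/2 * norm (z - w)) \<le> h z" using d1 z by simp
      have B: "norm (F z - F w - inner (z - w) D) \<le> e/2 * norm (z - w)" using d2 z by simp
      then have B': "F w + inner (z - w) D - e/2 * norm (z - w) \<le> F z" by (smt (verit) real_norm_def)
      show "H w + ereal (inner (p + D) (z - w) - e * norm (z - w)) \<le> H z"
      proof (cases "h z")
        case (real s)
        with A hw have "hw + (inner p (z - w) - e/2 * norm (z - w)) \<le> s" by simp
        moreover have "inner (p + D) (z - w) = inner p (z - w) + inner D (z - w)"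
          by (simp add: inner_add_left)
        moreover have "inner (z - w) D = inner D (z - w)" by (simp add: inner_commute)
        ultimately have "(F w + hw) + (inner (p + D) (z - w) - e * norm (z - w)) \<le> F z + s"
          using B' by linarith
        then show ?thesis using H[OF zS] H[OF S(2)] real hw by simp
      next
        case PInf then show ?thesis using H[OF zS] by simp
      next
        case MInf with A hw show ?thesis by simp
      qed
    qed
  qed
qed


lemma accept_dec:
  assumes "fb_accept feas qm G \<alpha> \<gamma> u w" "0 < \<gamma>" "\<alpha> < 1"
  shows "qm w \<le> qm u"
proof -
  have nn: "0 \<le> (1 - \<alpha>) / (2 * \<gamma>) * (norm (w - u))\<^sup>2" using assms by simp
  have "qm w \<le> qm u - ereal ((1 - \<alpha>) / (2 * \<gamma>) * (norm (w - u))\<^sup>2)"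
    using assms(1) unfolding fb_accept_def by blast
  also have "\<dots> \<le> qm u" using nn by (cases "qm u") auto
  finally show ?thesis .
qed

lemma fmu_deriv:
  fixes f :: "'a::real_inner \<Rightarrow> real"
  assumes f_grad: "\<And>z. GDERIV f z :> gf z"
    and c_grad: "\<And>i z. i < m \<Longrightarrow> GDERIV (c i) z :> gc i z"
    and b_deriv: "\<And>t. t < 0 \<Longrightarrow> (b has_real_derivative db t) (at t)"
    and w: "strict_feas m c w"
  shows "((\<lambda>z. f z + \<mu> * (\<Sum>i<m. b (c i z))) has_derivative (\<lambda>v. inner v (grad_fmu gf m c gc db \<mu> w))) (at w)"
proof -
  have ci: "((\<lambda>z. b (c i z)) has_derivative (\<lambda>v. db (c i w) * inner v (gc i w))) (at w)" if i: "i < m" for i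
  proof -
    have c': "(c i has_derivative (\<lambda>h. inner h (gc i w))) (at w)" using c_grad[OF i] unfolding gderiv_def .
    have b': "(b has_derivative (*) (db (c i w))) (at (c i w))"
      using b_deriv[of "c i w"] w i unfolding strict_feas_def has_field_derivative_def by auto
    show ?thesis using has_derivative_compose[OF c' b'] .
  qed
  have f': "(f has_derivative (\<lambda>h. inner h (gf w))) (at w)" using f_grad[of w] unfolding gderiv_def .
  have "((\<lambda>z. f z + \<mu> * (\<Sum>i<m. b (c i z))) has_derivative
        (\<lambda>v. inner v (gf w) + \<mu> * (\<Sum>i<m. db (c i w) * inner v (gc i w)))) (at w)"
    by (intro has_derivative_add f' has_derivative_mult_right has_derivative_sum ci) simp
  moreover have "(\<lambda>v. inner v (gf w) + \<mu> * (\<Sum>i<m. db (c i w) * inner v (gc i w)))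
       = (\<lambda>v. inner v (grad_fmu gf m c gc db \<mu> w))"
    by (simp add: grad_fmu_def inner_add_right inner_sum_right)
  ultimately show ?thesis by simp
qed

lemma feas_open:
  fixes c :: "nat \<Rightarrow> 'a::real_inner \<Rightarrow> real"
  assumes c_grad: "\<And>i z. i < m \<Longrightarrow> GDERIV (c i) z :> gc i z"
  shows "open {z. strict_feas m c z}"
proof -
  have cont: "continuous_on UNIV (c i)" if "i < m" for i
  proof -
    have "\<forall>z. isCont (c i) z"
      using c_grad[OF that] unfolding gderiv_def by (blast intro: has_derivative_continuous)
    then show ?thesis by (simp add: continuous_at_imp_continuous_on)
  qed
  have eq: "{z. strict_feas m c z} = (\<Inter>i\<in>{..<m}. {z. c i z < 0})"
    unfolding strict_feas_def by auto
  show ?thesis unfolding eq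
    by (intro open_INT ballI open_Collect_less cont continuous_on_const) auto
qed

theorem lemma4p1:
  fixes f :: "real^'n \<Rightarrow> real" and gf :: "real^'n \<Rightarrow> real^'n"
    and g :: "real^'n \<Rightarrow> ereal"
    and m :: nat and c :: "nat \<Rightarrow> real^'n \<Rightarrow> real" and gc :: "nat \<Rightarrow> real^'n \<Rightarrow> real^'n"
    and b db d2b :: "real \<Rightarrow> real"
    and \<gamma>0 \<alpha> \<beta> \<epsilon>p \<epsilon>d \<theta>\<epsilon> \<theta>\<mu> :: real
    and x :: "nat \<Rightarrow> real^'n" and y :: "nat \<Rightarrow> nat \<Rightarrow> real"
    and eps mu :: "nat \<Rightarrow> real" and k :: nat
  assumes f_grad: "\<And>z. GDERIV f z :> gf z" and gf_lip: "loc_lipschitz gf"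
    and g_proper: "proper_fun g" and g_lsc: "lsc_fun g" and g_pb: "prox_bounded g"
    and g_cont: "cont_rel_dom g"
    and c_grad: "\<And>i z. i < m \<Longrightarrow> GDERIV (c i) z :> gc i z"
    and gc_lip: "\<And>i. i < m \<Longrightarrow> loc_lipschitz (gc i)"
    and inf_fin: "\<bar>Inf (qfun f g ` {z. \<forall>i<m. c i z \<le> 0})\<bar> \<noteq> \<infinity>"
    and F_ne: "\<exists>z. qfun f g z \<noteq> \<infinity> \<and> strict_feas m c z"
    and b_nonneg: "\<And>t. t < 0 \<Longrightarrow> 0 \<le> b t"
    and b_deriv: "\<And>t. t < 0 \<Longrightarrow> (b has_real_derivative db t) (at t)"
    and db_deriv: "\<And>t. t < 0 \<Longrightarrow> (db has_real_derivative d2b t) (at t)"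
    and d2b_cont: "continuous_on {..<0} d2b"
    and db_pos: "\<And>t. t < 0 \<Longrightarrow> db t > 0"
    and b_blowup: "filterlim b at_top (at_left 0)"
    and \<gamma>0: "0 < \<gamma>0" "ereal \<gamma>0 < prox_threshold g"
    and \<alpha>: "0 < \<alpha>" "\<alpha> < 1" and \<beta>: "0 < \<beta>" "\<beta> < 1"
    and tol: "0 < \<epsilon>p" "0 < \<epsilon>d"
    and \<theta>: "0 < \<theta>\<epsilon>" "\<theta>\<epsilon> < 1" "0 < \<theta>\<mu>" "\<theta>\<mu> < 1"
    and x0: "qfun f g (x 0) \<noteq> \<infinity>" "strict_feas m c (x 0)"
    and init: "0 < eps 0" "0 < mu 0"
    and inner: "\<And>j. j \<le> k \<Longrightarrow>
        ipfb_returns (strict_feas m c) (qmu f g m c b (mu j)) g (grad_fmu gf m c gc db (mu j))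
                     \<gamma>0 \<alpha> \<beta> (x j) (eps j) (x (Suc j))"
    and mult: "\<And>j i. j \<le> k \<Longrightarrow> y (Suc j) i = mu j * db (c i (x (Suc j)))"
    and no_stop: "\<And>j. j < k \<Longrightarrow>
        \<not> (eps j \<le> \<epsilon>d \<and> (\<forall>i<m. min (- c i (x (Suc j))) (y (Suc j) i) \<le> \<epsilon>p))"
    and upd: "\<And>j. j < k \<Longrightarrow> 0 < eps (Suc j) \<and> eps (Suc j) \<le> max \<epsilon>d (\<theta>\<epsilon> * eps j)
                              \<and> 0 < mu (Suc j) \<and> mu (Suc j) \<le> \<theta>\<mu> * mu j"
  shows "qfun f g (x (Suc k)) \<le> qmu f g m c b (mu k) (x (Suc k))
       \<and> qmu f g m c b (mu k) (x (Suc k)) \<le> qmu f g m c b (mu k) (x k)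
       \<and> (k \<ge> 1 \<longrightarrow> qmu f g m c b (mu k) (x k) \<le> qmu f g m c b (mu (k - 1)) (x k))
       \<and> dist_set_le 0 (regular_subdiff (qmu f g m c b (mu k)) (x (Suc k))) (eps k)
       \<and> qfun f g (x (Suc k)) \<noteq> \<infinity> \<and> strict_feas m c (x (Suc k))
       \<and> (\<forall>i<m. y (Suc k) i \<ge> 0)
       \<and> dist_set_le (- (\<Sum>i<m. y (Suc k) i *\<^sub>R gc i (x (Suc k))))
                     (limiting_subdiff (qfun f g) (x (Suc k))) (eps k)"
proof -
  define Q where "Q j = qmu f g m c b (mu j)" for j
  define G where "G j = grad_fmu gf m c gc db (mu j)" for j
  have mupos: "0 < mu j" if "j \<le> k" for j
  proof (cases j)
    case 0 then show ?thesis using init by simp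
  next
    case (Suc i) then show ?thesis using upd[of i] that by simp
  qed
  have IB: "\<exists>\<gamma> z. 0 < \<gamma> \<and> x (Suc j) \<in> Tmap g (G j) \<gamma> z \<and> fb_accept (strict_feas m c) (Q j) (G j) \<alpha> \<gamma> z (x (Suc j))
           \<and> fb_stop (G j) \<gamma> z (x (Suc j)) (eps j) \<and> Q j z \<le> Q j (x j)" if "j \<le> k" for j
    unfolding Q_def G_def by (rule ipfb_basic[OF inner[OF that] \<gamma>0(1) \<alpha>(2) \<beta>(1)])
  have feasS: "strict_feas m c (x (Suc j))" if "j \<le> k" for j
    using IB[OF that] unfolding fb_accept_def by blast
  have decS: "Q j (x (Suc j)) \<le> Q j (x j)" if jk: "j \<le> k" for j
  proof -
    obtain \<gamma> z where "0 < \<gamma>" "fb_accept (strict_feas m c) (Q j) (G j) \<alpha> \<gamma> z (x (Suc j))" "Q j z \<le> Q j (x j)"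
      using IB[OF jk] by blast
    then show ?thesis using accept_dec[of _ "Q j"] \<alpha>(2) by (meson order_trans)
  qed
  have Qfeas: "Q j z = ereal (f z + mu j * (\<Sum>i<m. b (c i z))) + g z" if "strict_feas m c z" for j z
    using that unfolding Q_def qmu_def fmu_def by simp
  have gnm: "g z \<noteq> -\<infinity>" for z using g_proper unfolding proper_fun_def by blast
  have gfin: "j \<le> Suc k \<longrightarrow> g (x j) \<noteq> \<infinity> \<and> strict_feas m c (x j)" for j
  proof (induction j)
    case 0 then show ?case using x0 unfolding qfun_def by auto
  next
    case (Suc j)
    show ?case
    proof
      assume jk: "Suc j \<le> Suc k"
      then have IH: "g (x j) \<noteq> \<infinity>" "strict_feas m c (x j)" using Suc.IH by auto
      have fs: "strict_feas m c (x (Suc j))" using feasS jk by simp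
      have "Q j (x j) \<noteq> \<infinity>" using Qfeas[OF IH(2)] IH(1) by simp
      then have "Q j (x (Suc j)) \<noteq> \<infinity>" using decS[of j] jk by (metis ereal_infty_less_eq(1) le_Suc_eq Suc_le_mono)
      then show "g (x (Suc j)) \<noteq> \<infinity> \<and> strict_feas m c (x (Suc j))" using Qfeas[OF fs] fs by auto
    qed
  qed
  define w where "w = x (Suc k)"
  have wf: "strict_feas m c w" "g w \<noteq> \<infinity>" using gfin[of "Suc k"] unfolding w_def by auto
  have gwfin: "\<bar>g w\<bar> \<noteq> \<infinity>" using wf gnm[of w] by auto
  have sumnn: "0 \<le> (\<Sum>i<m. b (c i z))" if "strict_feas m c z" for z
    using that b_nonneg unfolding strict_feas_def by (intro sum_nonneg) auto
  have P1: "qfun f g w \<le> Q k w"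
  proof -
    have "f w \<le> f w + mu k * (\<Sum>i<m. b (c i w))" using mupos[of k] sumnn[OF wf(1)] by simp
    then show ?thesis unfolding qfun_def Qfeas[OF wf(1)] using gwfin gnm[of w]
      by (cases "g w") auto
  qed
  have P3: "k \<ge> 1 \<longrightarrow> Q k (x k) \<le> Q (k - 1) (x k)"
  proof
    assume k1: "k \<ge> 1"
    have xf: "strict_feas m c (x k)" "g (x k) \<noteq> \<infinity>" using gfin[of k] by auto
    have "mu k \<le> \<theta>\<mu> * mu (k - 1)" using upd[of "k - 1"] k1 by simp
    also have "\<dots> \<le> mu (k - 1)" using \<theta> mupos[of "k - 1"] by simp
    finally have "mu k * (\<Sum>i<m. b (c i (x k))) \<le> mu (k - 1) * (\<Sum>i<m. b (c i (x k)))"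
      using sumnn[OF xf(1)] by (intro mult_right_mono) auto
    then show "Q k (x k) \<le> Q (k - 1) (x k)" unfolding Qfeas[OF xf(1)] using xf gnm[of "x k"]
      by (cases "g (x k)") auto
  qed
  obtain \<gamma> z where gam: "0 < \<gamma>" and wT: "w \<in> Tmap g (G k) \<gamma> z"
    and stop: "fb_stop (G k) \<gamma> z w (eps k)"
    using IB[of k] unfolding w_def by blast
  define p where "p = (1 / \<gamma>) *\<^sub>R ((z - \<gamma> *\<^sub>R G k z) - w)"
  have preg: "p \<in> regular_subdiff g w" unfolding p_def
  proof (rule prox_regular)
    show "w \<in> prox_set g \<gamma> (z - \<gamma> *\<^sub>R G k z)" using wT by (simp add: Tmap_def)
  qed (use gam gwfin in auto)
  have vreg: "p + G k w \<in> regular_subdiff (Q k) w"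
  proof (rule regular_subdiff_add_smooth[OF preg _ feas_open[OF c_grad]])
    show "((\<lambda>z. f z + mu k * (\<Sum>i<m. b (c i z))) has_derivative (\<lambda>v. inner v (G k w))) (at w)"
      unfolding G_def by (rule fmu_deriv[OF f_grad c_grad b_deriv wf(1)])
    show "w \<in> {z. strict_feas m c z}" using wf by simp
    show "\<And>u. u \<in> {z. strict_feas m c z} \<Longrightarrow> Q k u = ereal (f u + mu k * (\<Sum>i<m. b (c i u))) + g u"
      using Qfeas by simp
  qed
  have peq: "p + G k w = (1 / \<gamma>) *\<^sub>R (z - w) - G k z + G k w"
    unfolding p_def using gam by (simp add: algebra_simps scaleR_diff_right)
  have vnorm: "norm (p + G k w) \<le> eps k" using stop unfolding fb_stop_def peq .
  have P2: "dist_set_le 0 (regular_subdiff (Q k) w) (eps k)"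
    unfolding dist_set_le_def using vreg infdist_le[OF vreg, of 0] vnorm by auto
  have P4: "\<forall>i<m. y (Suc k) i \<ge> 0"
    using mult[of k] mupos[of k] db_pos wf(1) unfolding strict_feas_def w_def
    by (simp add: less_imp_le)
  have qreg: "p + gf w \<in> regular_subdiff (qfun f g) w"
  proof (rule regular_subdiff_add_smooth[OF preg _ open_UNIV])
    show "(f has_derivative (\<lambda>v. inner v (gf w))) (at w)" using f_grad[of w] unfolding gderiv_def .
  qed (auto simp: qfun_def)
  have qlim: "p + gf w \<in> limiting_subdiff (qfun f g) w"
    unfolding limiting_subdiff_def
    by (rule CollectI, rule exI[of _ "\<lambda>_. w"], rule exI[of _ "\<lambda>_. p + gf w"]) (use qreg in simp)
  have ysum: "(\<Sum>i<m. y (Suc k) i *\<^sub>R gc i w) = mu k *\<^sub>R (\<Sum>i<m. db (c i w) *\<^sub>R gc i w)"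
    using mult[of k] unfolding w_def by (simp add: scaleR_sum_right)
  have veq: "- (\<Sum>i<m. y (Suc k) i *\<^sub>R gc i w) - (p + gf w) = - (p + G k w)"
    unfolding ysum G_def grad_fmu_def by (simp add: algebra_simps)
  have "dist (- (\<Sum>i<m. y (Suc k) i *\<^sub>R gc i w)) (p + gf w) \<le> eps k"
    unfolding dist_norm veq norm_minus_cancel by (rule vnorm)
  then have P5: "dist_set_le (- (\<Sum>i<m. y (Suc k) i *\<^sub>R gc i w)) (limiting_subdiff (qfun f g) w) (eps k)"
    unfolding dist_set_le_def using qlim infdist_le[OF qlim] by (meson empty_iff order_trans) (use qlim in blast)
  have qw: "qfun f g w \<noteq> \<infinity>" using wf unfolding qfun_def by simp
  show ?thesis
    using P1 decS[of k] P3 P2 qw wf(1) P4 P5 unfolding Q_def w_def by simp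
qed

end
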